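(* Consider {\L}ukasiewicz real-valued logic, in which the disjunction $\lor$ has $f_\lor(a,b)=\min\{1,a+b\}$, and let $A_1,A_2$ be distinct atomic propositions. There is no finite Boolean combination (built with classical $\land,\lor,\neg$ over sentences) of sentences of the form $(A_1,S)$ or $(A_2,S)$, with $S\subseteq[0,1]$ arbitrary, that is equivalent to the sentence $(A_1\lor A_2,\{0.5\})$ (i.e., has exactly the same models).
   Context: Setting (real-valued logic). Fix a finite set of atomic propositions, a finite set of binary connectives and a finite set of unary connectives. Each binary connective $\alpha$ comes with a function $f_\alpha:[0,1]^2\to[0,1]$ and each unary connective $\rho$ with a function $f_\rho:[0,1]\to[0,1]$. Formulas are built recursively from atomic propositions using the connectives. A model $M$ assigns a value in $[0,1]$ to each atomic proposition; the value of a compound formula is computed recursively via $f_\alpha$, $f_\rho$. A sentence is $(\sigma_1,\ldots,\sigma_k,S)$ with pairwise distinct formulas $\sigma_i$ and $S\subseteq[0,1]^k$; $M$ satisfies it if the tuple of values of $\sigma_1,\ldots,\sigma_k$ in $M$ lies in $S$. A Boolean combination of sentences is satisfied by $M$ according to the classical truth-table reading of $\land,\lor,\neg$ applied to the satisfaction of its constituent sentences. *)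

theory Defs
  imports Complex_Main
begin

datatype ('a, 'b, 'u) form =
    Atom 'a
  | Bin 'b "('a, 'b, 'u) form" "('a, 'b, 'u) form"
  | Unary 'u "('a, 'b, 'u) form"

fun fval :: "('b \<Rightarrow> real \<Rightarrow> real \<Rightarrow> real) \<Rightarrow> ('u \<Rightarrow> real \<Rightarrow> real)
              \<Rightarrow> ('a \<Rightarrow> real) \<Rightarrow> ('a, 'b, 'u) form \<Rightarrow> real" where
  "fval fb fu M (Atom a) = M a"
| "fval fb fu M (Bin b \<phi> \<psi>) = fb b (fval fb fu M \<phi>) (fval fb fu M \<psi>)"
| "fval fb fu M (Unary u \<phi>) = fu u (fval fb fu M \<phi>)"

definition is_model :: "('a \<Rightarrow> real) \<Rightarrow> bool" where
  "is_model M \<longleftrightarrow> (\<forall>a. M a \<in> {0..1})"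

text \<open>A sentence (sigma_1,...,sigma_k, S): a list of formulas and a set of k-tuples (lists).\<close>
type_synonym ('a, 'b, 'u) sentence = "('a, 'b, 'u) form list \<times> real list set"

definition wf_sentence :: "('a, 'b, 'u) sentence \<Rightarrow> bool" where
  "wf_sentence s \<longleftrightarrow> distinct (fst s) \<and>
     snd s \<subseteq> {xs. length xs = length (fst s) \<and> set xs \<subseteq> {0..1}}"

definition sat_sentence :: "('b \<Rightarrow> real \<Rightarrow> real \<Rightarrow> real) \<Rightarrow> ('u \<Rightarrow> real \<Rightarrow> real)
     \<Rightarrow> ('a \<Rightarrow> real) \<Rightarrow> ('a, 'b, 'u) sentence \<Rightarrow> bool" where
  "sat_sentence fb fu M s \<longleftrightarrow> map (fval fb fu M) (fst s) \<in> snd s"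

datatype 's bcomb = BSent 's | BAnd "'s bcomb" "'s bcomb" | BOr "'s bcomb" "'s bcomb" | BNot "'s bcomb"

fun bsents :: "'s bcomb \<Rightarrow> 's set" where
  "bsents (BSent s) = {s}"
| "bsents (BAnd p q) = bsents p \<union> bsents q"
| "bsents (BOr p q) = bsents p \<union> bsents q"
| "bsents (BNot p) = bsents p"

fun bsat :: "('s \<Rightarrow> bool) \<Rightarrow> 's bcomb \<Rightarrow> bool" where
  "bsat I (BSent s) = I s"
| "bsat I (BAnd p q) = (bsat I p \<and> bsat I q)"
| "bsat I (BOr p q) = (bsat I p \<or> bsat I q)"
| "bsat I (BNot p) = (\<not> bsat I p)"

end

theory Submission
  imports Defs
begin

lemma bsat_cong: "(\<And>s. s \<in> bsents P \<Longrightarrow> I s = J s) \<Longrightarrow> bsat I P = bsat J P"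
  by (induction P) auto

lemma finite_bsents: "finite (bsents P)"
  by (induction P) auto

theorem theorem1:
  fixes fb :: "'b::finite \<Rightarrow> real \<Rightarrow> real \<Rightarrow> real"
    and fu :: "'u::finite \<Rightarrow> real \<Rightarrow> real"
    and A1 A2 :: "'a::finite"
    and disj :: 'b
  assumes fb_range: "\<And>b x y. x \<in> {0..1} \<Longrightarrow> y \<in> {0..1} \<Longrightarrow> fb b x y \<in> {0..1}"
    and fu_range: "\<And>u x. x \<in> {0..1} \<Longrightarrow> fu u x \<in> {0..1}"
    and luk_disj: "\<And>x y. fb disj x y = min 1 (x + y)"
    and distinct_atoms: "A1 \<noteq> A2"
  shows "\<not> (\<exists>\<Phi> :: ('a, 'b, 'u) sentence bcomb.
            (\<forall>s \<in> bsents \<Phi>. wf_sentence s \<and>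
                (\<exists>S. s = ([Atom A1], S) \<or> s = ([Atom A2], S))) \<and>
            (\<forall>M. is_model M \<longrightarrow>
                (bsat (sat_sentence fb fu M) \<Phi> \<longleftrightarrow>
                 sat_sentence fb fu M ([Bin disj (Atom A1) (Atom A2)], {[1/2]}))))"
proof
  assume "\<exists>\<Phi> :: ('a, 'b, 'u) sentence bcomb.
            (\<forall>s \<in> bsents \<Phi>. wf_sentence s \<and>
                (\<exists>S. s = ([Atom A1], S) \<or> s = ([Atom A2], S))) \<and>
            (\<forall>M. is_model M \<longrightarrow>
                (bsat (sat_sentence fb fu M) \<Phi> \<longleftrightarrow>
                 sat_sentence fb fu M ([Bin disj (Atom A1) (Atom A2)], {[1/2]})))"
  then obtain \<Phi> :: "('a, 'b, 'u) sentence bcomb" where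
    shp: "\<forall>s \<in> bsents \<Phi>. (\<exists>S. s = ([Atom A1], S) \<or> s = ([Atom A2], S))" and
    eqv: "\<forall>M. is_model M \<longrightarrow>
                (bsat (sat_sentence fb fu M) \<Phi> \<longleftrightarrow>
                 sat_sentence fb fu M ([Bin disj (Atom A1) (Atom A2)], {[1/2]}))"
    by blast
  define F where "F = bsents \<Phi>"
  have finF: "finite F" unfolding F_def by (rule finite_bsents)
  define sig where "sig x = {s\<in>F. fst s = [Atom A1] \<and> [x] \<in> snd s}" for x :: real
  have "\<not> inj_on sig {0..1/2}"
  proof
    assume inj: "inj_on sig {0..1/2}"
    have "sig ` {0..1/2} \<subseteq> Pow F" unfolding sig_def by auto
    hence "finite (sig ` {0..1/2})" using finF by (meson finite_Pow_iff finite_subset)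
    hence "finite {0..(1/2::real)}" using inj finite_imageD by blast
    moreover have "infinite {0..(1/2::real)}" by (rule infinite_Icc) simp
    ultimately show False by blast
  qed
  then obtain x x' where xs: "x \<in> {0..1/2}" "x' \<in> {0..1/2}" "x \<noteq> x'" "sig x = sig x'"
    unfolding inj_on_def by blast
  define M where "M = (\<lambda>a. if a = A1 then x else if a = A2 then 1/2 - x else 0)"
  define M' where "M' = (\<lambda>a. if a = A1 then x' else if a = A2 then 1/2 - x else 0)"
  have mM: "is_model M" unfolding is_model_def M_def using xs by simp
  have mM': "is_model M'" unfolding is_model_def M'_def using xs(1,2) by simp
  have agree: "sat_sentence fb fu M s = sat_sentence fb fu M' s" if "s \<in> bsents \<Phi>" for s
  proof -
    have "\<exists>S. s = ([Atom A1], S) \<or> s = ([Atom A2], S)" using shp that by simp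
    then obtain S where "s = ([Atom A1], S) \<or> s = ([Atom A2], S)" by (elim exE)
    thus ?thesis
    proof
      assume s: "s = ([Atom A1], S)"
      have sF: "s \<in> F" using that unfolding F_def by simp
      have "s \<in> sig x \<longleftrightarrow> s \<in> sig x'" using xs(4) by simp
      hence "[x] \<in> S \<longleftrightarrow> [x'] \<in> S" using s sF unfolding sig_def by simp
      moreover have "M A1 = x" "M' A1 = x'" unfolding M_def M'_def by simp_all
      ultimately show ?thesis using s unfolding sat_sentence_def by simp
    next
      assume s: "s = ([Atom A2], S)"
      have "M A2 = M' A2" unfolding M_def M'_def using distinct_atoms by simp
      thus ?thesis using s unfolding sat_sentence_def by simp
    qed
  qed
  have "bsat (sat_sentence fb fu M) \<Phi> = bsat (sat_sentence fb fu M') \<Phi>"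
    by (rule bsat_cong) (rule agree)
  moreover have "sat_sentence fb fu M ([Bin disj (Atom A1) (Atom A2)], {[1/2]})"
    unfolding sat_sentence_def M_def using distinct_atoms by (simp add: luk_disj)
  moreover have "\<not> sat_sentence fb fu M' ([Bin disj (Atom A1) (Atom A2)], {[1/2]})"
    unfolding sat_sentence_def M'_def using distinct_atoms xs by (auto simp add: luk_disj min_def)
  ultimately show False using eqv mM mM' by blast
qed

end
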